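(* Suppose there exists a $\pi_p$-bounded element $\xi\in G$. If $f\in L^p(G,V)$ satisfies $\pi(\xi)f=f$, then $f=0$ almost everywhere.
   Context: $G$ is a locally compact second countable group with left Haar measure $\mu$; $(\pi_0,V)$ is a continuous representation of $G$ on a separable Banach space $V$; for $p>1$, $\pi$ acts on the Bochner space $L^p(G,V)$ by $(\pi(g)f)(h)=\pi_0(g)(f(hg))$. An element $\xi\in G$ is $\pi_p$-bounded if the semigroup $\{\xi^n:n>0\}$ is not relatively compact and $\sup_{n>0}|||\pi(\xi^n)|||_{L^p(G,V)}<\infty$. *)

theory Defs
  imports "HOL-Analysis.Analysis"
begin

definition topological_group :: "('g::{monoid_mult,inverse,topological_space}) itself \<Rightarrow> bool" where
  "topological_group _ \<longleftrightarrow>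
     (\<forall>x::'g. inverse x * x = 1 \<and> x * inverse x = 1) \<and>
     continuous_on (UNIV :: ('g \<times> 'g) set) (\<lambda>(x,y). x * y) \<and>
     continuous_on (UNIV :: 'g set) inverse"

definition left_haar_measure :: "('g::{monoid_mult,topological_space}) measure \<Rightarrow> bool" where
  "left_haar_measure M \<longleftrightarrow>
     sets M = sets borel \<and>
     (\<forall>K. compact K \<longrightarrow> emeasure M K < \<infinity>) \<and>
     (\<forall>U. open U \<longrightarrow> U \<noteq> {} \<longrightarrow> emeasure M U > 0) \<and>
     (\<forall>A \<in> sets borel. emeasure M A = (INF U \<in> {U. open U \<and> A \<subseteq> U}. emeasure M U)) \<and>
     (\<forall>U. open U \<longrightarrow> emeasure M U = (SUP K \<in> {K. compact K \<and> K \<subseteq> U}. emeasure M K)) \<and>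
     (\<forall>g. \<forall>A \<in> sets borel. emeasure M ((\<lambda>h. g * h) ` A) = emeasure M A)"

definition continuous_representation ::
    "('g::{monoid_mult,topological_space} \<Rightarrow> 'v::real_normed_vector \<Rightarrow> 'v) \<Rightarrow> bool" where
  "continuous_representation \<pi>0 \<longleftrightarrow>
     (\<forall>g. bounded_linear (\<pi>0 g)) \<and>
     \<pi>0 1 = id \<and>
     (\<forall>g h. \<pi>0 (g * h) = \<pi>0 g \<circ> \<pi>0 h) \<and>
     (\<forall>v. continuous_on UNIV (\<lambda>g. \<pi>0 g v))"

text \<open>The Bochner space L^p(G,V) (as a set of representatives).\<close>
definition Lp_space :: "'g measure \<Rightarrow> real \<Rightarrow> ('g \<Rightarrow> 'v::{banach,second_countable_topology}) set" where
  "Lp_space M p = {f. f \<in> borel_measurable M \<and> integrable M (\<lambda>x. norm (f x) powr p)}"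

definition Lp_pow :: "'g measure \<Rightarrow> real \<Rightarrow> ('g \<Rightarrow> 'v::real_normed_vector) \<Rightarrow> ennreal" where
  "Lp_pow M p f = (\<integral>\<^sup>+ x. ennreal (norm (f x) powr p) \<partial>M)"

definition pi_rep :: "('g::monoid_mult \<Rightarrow> 'v \<Rightarrow> 'v) \<Rightarrow> 'g \<Rightarrow> ('g \<Rightarrow> 'v) \<Rightarrow> ('g \<Rightarrow> 'v)" where
  "pi_rep \<pi>0 g f = (\<lambda>h. \<pi>0 g (f (h * g)))"

text \<open>xi is pi_p-bounded: the forward semigroup is not relatively compact and
  sup_{n>0} |||pi(xi^n)|||_{L^p} < infinity, i.e. there is C with
  ||pi(xi^n) f||_p^p <= C ||f||_p^p for all n > 0 and f in L^p.\<close>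
definition pi_p_bounded ::
    "'g::{monoid_mult,topological_space} measure \<Rightarrow> real \<Rightarrow> ('g \<Rightarrow> 'v::{banach,second_countable_topology} \<Rightarrow> 'v) \<Rightarrow> 'g \<Rightarrow> bool" where
  "pi_p_bounded M p \<pi>0 \<xi> \<longleftrightarrow>
     \<not> compact (closure {\<xi> ^ n | n. n > 0}) \<and>
     (\<exists>C::real. C \<ge> 0 \<and> (\<forall>n>0. \<forall>f \<in> Lp_space M p.
        Lp_pow M p (pi_rep \<pi>0 (\<xi> ^ n) f) \<le> ennreal C * Lp_pow M p f))"

end

theory Submission
  imports Defs
begin

lemma tg_inv_mult:
  assumes "topological_group TYPE('g::{monoid_mult,inverse,topological_space})"
  shows "inverse (h::'g) * (h * x) = x"
  using assms unfolding topological_group_def by (metis mult.assoc mult_1_left)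

lemma tg_cont_rmult:
  assumes "topological_group TYPE('g::{monoid_mult,inverse,topological_space})"
  shows "continuous_on UNIV (\<lambda>h::'g. h * a)"
proof -
  have c: "continuous_on (UNIV :: ('g \<times> 'g) set) (\<lambda>(x,y). x * y)"
    using assms unfolding topological_group_def by auto
  have "continuous_on UNIV ((\<lambda>(x,y). x * y) \<circ> (\<lambda>h::'g. (h, a)))"
    by (rule continuous_on_compose) (auto intro!: continuous_intros c[THEN continuous_on_subset])
  then show ?thesis by (simp add: o_def)
qed

lemma tg_cont_diff:
  assumes "topological_group TYPE('g::{monoid_mult,inverse,topological_space})"
  shows "continuous_on UNIV (\<lambda>(a::'g, b). inverse a * b)"
proof -
  have c: "continuous_on (UNIV :: ('g \<times> 'g) set) (\<lambda>(x,y). x * y)"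
    and ci: "continuous_on (UNIV :: 'g set) inverse"
    using assms unfolding topological_group_def by auto
  have "continuous_on UNIV (\<lambda>z::'g\<times>'g. (inverse (fst z), snd z))"
    by (intro continuous_intros continuous_on_compose2[OF ci]) auto
  then have "continuous_on UNIV ((\<lambda>(x,y). x * y) \<circ> (\<lambda>z::'g\<times>'g. (inverse (fst z), snd z)))"
    by (rule continuous_on_compose) (auto intro: c[THEN continuous_on_subset])
  then show ?thesis by (simp add: o_def case_prod_beta)
qed

lemma escape:
  assumes tg: "topological_group TYPE('g::{monoid_mult,inverse,t2_space})"
    and K: "compact (K::'g set)"
    and nc: "\<not> compact (closure {\<xi> ^ n | n. n > 0})"
  obtains n where "n > 0" "\<And>h. h \<in> K \<Longrightarrow> h * \<xi> ^ n \<notin> K"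
proof -
  define S where "S = (\<lambda>(a, b). inverse a * b) ` (K \<times> K)"
  have cS: "compact S"
    unfolding S_def
    by (rule compact_continuous_image[OF continuous_on_subset[OF tg_cont_diff[OF tg]] compact_Times[OF K K]]) simp
  have "\<exists>n>0. \<xi> ^ n \<notin> S"
  proof (rule ccontr)
    assume a: "\<not> (\<exists>n>0. \<xi> ^ n \<notin> S)"
    have sub: "{\<xi> ^ n | n. n > 0} \<subseteq> S"
    proof
      fix x assume "x \<in> {\<xi> ^ n | n. n > 0}"
      then obtain n where "x = \<xi> ^ n" "n > 0" by blast
      then show "x \<in> S" using a by metis
    qed
    have "closure {\<xi> ^ n | n. n > 0} \<subseteq> S"
      by (rule closure_minimal[OF sub compact_imp_closed[OF cS]])
    then have "compact (closure {\<xi> ^ n | n. n > 0})"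
      using compact_Int_closed[OF cS closed_closure] by (metis Int_absorb1)
    with nc show False by blast
  qed
  then obtain n where n: "n > 0" "\<xi> ^ n \<notin> S" by blast
  show ?thesis
  proof (rule that[OF n(1)])
    fix h assume h: "h \<in> K"
    show "h * \<xi> ^ n \<notin> K"
    proof
      assume hK: "h * \<xi> ^ n \<in> K"
      have "inverse h * (h * \<xi> ^ n) \<in> S" unfolding S_def
        by (rule image_eqI[where x="(h, h * \<xi> ^ n)"]) (use h hK in auto)
      then show False using n(2) tg_inv_mult[OF tg] by simp
    qed
  qed
qed

lemma sigma_compact:
  assumes "locally_compact_space (euclidean :: 'g topology)"
  obtains K :: "nat \<Rightarrow> ('g::second_countable_topology) set" where "incseq K" "\<And>m. compact (K m)" "(\<Union>m. K m) = UNIV"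
proof -
  have "\<forall>x::'g. \<exists>U C. open U \<and> compact C \<and> x \<in> U \<and> U \<subseteq> C"
    using assms unfolding locally_compact_space_def by (simp add: openin_open_eq)
  then obtain U C where UC: "\<And>x::'g. open (U x) \<and> compact (C x) \<and> x \<in> U x \<and> U x \<subseteq> C x"
    by metis
  have opn: "\<And>S. S \<in> range U \<Longrightarrow> open S" using UC by blast
  obtain F where F: "F \<subseteq> range U" "countable F" "\<Union>F = \<Union>(range U)"
    using Lindelof[of "range U", OF opn] by metis
  have "\<exists>X. countable X \<and> X \<subseteq> UNIV \<and> F = U ` X"
    using F(1,2) countable_subset_image[of F U UNIV] by simp
  then obtain X where X: "countable X" "F = U ` X" by blast
  have "\<Union>(range U) = UNIV" using UC by blast
  then have UN: "\<Union>(U ` X) = UNIV" using F(3) X(2) by simp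
  then have "X \<noteq> {}" by auto
  then have rX: "range (from_nat_into X) = X" using X(1) by (rule range_from_nat_into)
  define K where "K m = (\<Union>i\<le>m. C (from_nat_into X i))" for m
  show ?thesis
  proof (rule that)
    show "incseq K" unfolding K_def incseq_def by (intro allI impI UN_mono) auto
    show "compact (K m)" for m unfolding K_def using UC by (intro compact_UN) auto
    show "(\<Union>m. K m) = UNIV"
    proof -
      { fix x :: 'g
        obtain y where y: "y \<in> X" "x \<in> U y" using UN by blast
        then obtain i where "from_nat_into X i = y" using rX by (metis rangeE)
        then have "x \<in> K i" unfolding K_def using y UC by blast
        then have "x \<in> (\<Union>m. K m)" by blast }
      then show ?thesis by blast
    qed
  qed
qed

lemma rmult_measurable:
  assumes tg: "topological_group TYPE('g::{monoid_mult,inverse,topological_space})"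
    and sM: "sets M = sets (borel :: 'g measure)"
  shows "(\<lambda>h::'g. h * a) \<in> measurable M M"
proof -
  have "(\<lambda>h::'g. h * a) \<in> borel_measurable borel"
    by (rule borel_measurable_continuous_onI[OF tg_cont_rmult[OF tg]])
  then show ?thesis using measurable_cong_sets[OF sM sM] by simp
qed

lemma pi_rep_measurable:
  assumes tg: "topological_group TYPE('g::{monoid_mult,inverse,topological_space})"
    and sM: "sets M = sets (borel :: 'g measure)"
    and rep: "continuous_representation \<pi>0"
    and u: "u \<in> borel_measurable M"
  shows "pi_rep \<pi>0 a u \<in> borel_measurable M"
proof -
  have bl: "bounded_linear (\<pi>0 a)" using rep unfolding continuous_representation_def by auto
  have c: "\<pi>0 a \<in> borel_measurable borel"
    by (rule borel_measurable_continuous_onI[OF linear_continuous_on[OF bl]])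
  have "\<pi>0 a \<circ> (u \<circ> (\<lambda>h. h * a)) \<in> borel_measurable M"
    by (intro measurable_comp[OF measurable_comp[OF rmult_measurable[OF tg sM] u] c])
  then show ?thesis unfolding pi_rep_def by (simp add: o_def)
qed

lemma rep_inj:
  assumes tg: "topological_group TYPE('g::{monoid_mult,inverse,topological_space})"
    and rep: "continuous_representation (\<pi>0 :: 'g \<Rightarrow> 'v::real_normed_vector \<Rightarrow> 'v)"
    and v: "v \<noteq> 0"
  shows "\<pi>0 a v \<noteq> 0"
proof
  assume 0: "\<pi>0 a v = 0"
  have "\<pi>0 (inverse a * a) = \<pi>0 (inverse a) \<circ> \<pi>0 a" using rep unfolding continuous_representation_def by auto
  moreover have "inverse a * a = 1" using tg unfolding topological_group_def by auto
  ultimately have "id = \<pi>0 (inverse a) \<circ> \<pi>0 a" using rep unfolding continuous_representation_def by auto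
  then have "v = \<pi>0 (inverse a) 0" using 0 by (metis comp_apply id_apply)
  also have "\<dots> = 0" using rep unfolding continuous_representation_def
    by (meson bounded_linear.linear linear_0)
  finally show False using v by simp
qed

lemma null_translate:
  fixes M :: "('g::{monoid_mult,inverse,topological_space}) measure"
    and \<pi>0 :: "'g \<Rightarrow> 'v::{banach,second_countable_topology} \<Rightarrow> 'v"
  assumes tg: "topological_group TYPE('g)"
    and sM: "sets M = sets (borel :: 'g measure)"
    and rep: "continuous_representation \<pi>0"
    and p: "p > 0"
    and bd: "pi_p_bounded M p \<pi>0 \<xi>"
    and v: "(v::'v) \<noteq> 0"
    and n: "n > 0"
    and ae: "AE h in M. P h"
  shows "AE h in M. P (h * \<xi> ^ n)"
proof -
  from bd obtain C where C: "C \<ge> 0" "\<And>f. f \<in> Lp_space M p \<Longrightarrow>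
        Lp_pow M p (pi_rep \<pi>0 (\<xi> ^ n) f) \<le> ennreal C * Lp_pow M p f"
    unfolding pi_p_bounded_def using n by blast
  from ae obtain N where N: "{x \<in> space M. \<not> P x} \<subseteq> N" "emeasure M N = 0" "N \<in> sets M"
    by (rule AE_E)
  have spM: "space M = UNIV" using sets_eq_imp_space_eq[OF sM] by simp
  define u where "u h = indicator N h *\<^sub>R v" for h
  have um: "u \<in> borel_measurable M" unfolding u_def using N(3) by measurable
  have nu: "norm (u h) powr p = norm v powr p * indicator N h" for h
    unfolding u_def using p by (simp split: split_indicator)
  have "integrable M (\<lambda>h. norm v powr p * indicator N h)"
    using N by (intro integrable_mult_right integrable_real_indicator) auto
  then have uL: "u \<in> Lp_space M p" unfolding Lp_space_def using um nu by simp
  have "Lp_pow M p u = (\<integral>\<^sup>+ h. ennreal (norm v powr p) * indicator N h \<partial>M)"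
    unfolding Lp_pow_def nu by (intro nn_integral_cong) (simp split: split_indicator)
  also have "\<dots> = 0" using N by (simp add: nn_integral_cmult_indicator)
  finally have "Lp_pow M p (pi_rep \<pi>0 (\<xi> ^ n) u) \<le> 0" using C(2)[OF uL] by simp
  then have z: "Lp_pow M p (pi_rep \<pi>0 (\<xi> ^ n) u) = 0" by simp
  define w where "w = \<pi>0 (\<xi> ^ n) v"
  have w: "w \<noteq> 0" unfolding w_def by (rule rep_inj[OF tg rep v])
  define S where "S = (\<lambda>h. h * \<xi> ^ n) -` N"
  have S: "S \<in> sets M"
  proof -
    have "(\<lambda>h. h * \<xi> ^ n) -` N \<inter> space M \<in> sets M"
      using rmult_measurable[OF tg sM] N(3) by (rule measurable_sets)
    then show ?thesis unfolding S_def spM by simp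
  qed
  have bl: "bounded_linear (\<pi>0 (\<xi> ^ n))" using rep unfolding continuous_representation_def by auto
  have "pi_rep \<pi>0 (\<xi> ^ n) u h = indicator S h *\<^sub>R w" for h
    unfolding pi_rep_def u_def w_def S_def
    using linear_scale[OF bounded_linear.linear[OF bl]] by (simp split: split_indicator)
  then have "Lp_pow M p (pi_rep \<pi>0 (\<xi> ^ n) u) = (\<integral>\<^sup>+ h. ennreal (norm w powr p) * indicator S h \<partial>M)"
    unfolding Lp_pow_def using p by (intro nn_integral_cong) (simp split: split_indicator)
  also have "\<dots> = ennreal (norm w powr p) * emeasure M S" using S by (simp add: nn_integral_cmult_indicator)
  finally have "emeasure M S = 0" using z w by simp
  moreover have "{x \<in> space M. \<not> P (x * \<xi> ^ n)} \<subseteq> S" using N(1) unfolding S_def spM by auto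
  ultimately show ?thesis using S by (intro AE_I) auto
qed

lemma enn_arith:
  fixes A B T :: ennreal and C t :: real
  assumes C: "C \<ge> 0" and est: "A \<le> ennreal C * B" and s: "A + B = T" and Tt: "T = ennreal t" and t0: "t \<ge> 0"
  shows "A \<le> ennreal (C * t / (1 + C))"
proof -
  have "A < top" using s Tt by (metis ennreal_less_top le_iff_add order_le_less_trans)
  then obtain a where a: "A = ennreal a" "a \<ge> 0" by (cases A rule: ennreal_cases) auto
  have "B < top" using s Tt by (metis ennreal_less_top le_iff_add add.commute order_le_less_trans)
  then obtain b where b: "B = ennreal b" "b \<ge> 0" by (cases B rule: ennreal_cases) auto
  have "ennreal (a + b) = ennreal t" using s Tt a b by (simp add: ennreal_plus)
  then have ab: "a + b = t" using a b t0 by (subst (asm) ennreal_inj) auto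
  have "ennreal a \<le> ennreal (C * b)" using est a b C by (simp add: ennreal_mult)
  then have "a \<le> C * b" using b C by (simp add: ennreal_le_iff)
  then have "a * (1 + C) \<le> C * t" using ab by (simp add: algebra_simps flip: ab)
  then have "a \<le> C * t / (1 + C)" using C by (simp add: pos_le_divide_eq)
  then show ?thesis using a by (simp add: ennreal_leI)
qed
lemma fin_arith:
  fixes C t :: real assumes "C \<ge> 0" "t \<ge> 0" "t \<le> C * t / (1 + C)" shows "t = 0"
proof -
  have "t * (1 + C) \<le> C * t" using assms by (simp add: pos_le_divide_eq)
  then show ?thesis using assms by (simp add: algebra_simps)
qed

theorem lemma2:
  fixes M :: "('g::{monoid_mult,inverse,t2_space,second_countable_topology}) measure"
    and \<pi>0 :: "'g \<Rightarrow> 'v::{banach,second_countable_topology} \<Rightarrow> 'v"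
    and p :: real and \<xi> :: 'g and f :: "'g \<Rightarrow> 'v"
  assumes "topological_group TYPE('g)"
    and "locally_compact_space (euclidean :: 'g topology)"
    and "left_haar_measure M"
    and "continuous_representation \<pi>0"
    and "p > 1"
    and "pi_p_bounded M p \<pi>0 \<xi>"
    and "f \<in> Lp_space M p"
    and "AE h in M. pi_rep \<pi>0 \<xi> f h = f h"
  shows "AE h in M. f h = 0"
proof (cases "\<exists>v::'v. v \<noteq> 0")
  case False
  then show ?thesis by auto
next
  case True
  then obtain v :: 'v where v: "v \<noteq> 0" by blast
  note tg = assms(1) and rep = assms(4) and bd = assms(6) and fix1 = assms(8)
  have sM: "sets M = sets (borel :: 'g measure)" using assms(3) unfolding left_haar_measure_def by auto
  have spM: "space M = UNIV" using sets_eq_imp_space_eq[OF sM] by simp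
  have p: "p > 0" using assms(5) by simp
  have fm: "f \<in> borel_measurable M" and fi: "integrable M (\<lambda>x. norm (f x) powr p)"
    using assms(7) unfolding Lp_space_def by auto
  obtain C where C: "C \<ge> 0" "\<And>n u. n > 0 \<Longrightarrow> u \<in> Lp_space M p \<Longrightarrow>
        Lp_pow M p (pi_rep \<pi>0 (\<xi> ^ n) u) \<le> ennreal C * Lp_pow M p u"
    using bd unfolding pi_p_bounded_def by blast
  have nc: "\<not> compact (closure {\<xi> ^ n | n. n > 0})" using bd unfolding pi_p_bounded_def by blast
  have iter: "AE h in M. pi_rep \<pi>0 (\<xi> ^ n) f h = f h" if "n > 0" for n
    using that
  proof (induction n rule: nat_induct_non_zero)
    case 1
    then show ?case using fix1 by simp
  next
    case (Suc n)
    have tr: "AE h in M. pi_rep \<pi>0 \<xi> f (h * \<xi> ^ n) = f (h * \<xi> ^ n)"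
      by (rule null_translate[OF tg sM rep p bd v Suc.hyps(1) fix1])
    show ?case
      using tr Suc.IH
    proof eventually_elim
      case (elim h)
      have "pi_rep \<pi>0 (\<xi> ^ Suc n) f h = \<pi>0 (\<xi> ^ n * \<xi>) (f (h * (\<xi> ^ n * \<xi>)))"
        unfolding pi_rep_def power_Suc2 by (rule refl)
      also have "\<dots> = \<pi>0 (\<xi> ^ n) (\<pi>0 \<xi> (f ((h * \<xi> ^ n) * \<xi>)))"
        using rep unfolding continuous_representation_def by (simp add: mult.assoc)
      also have "\<dots> = \<pi>0 (\<xi> ^ n) (f (h * \<xi> ^ n))"
        using elim(1) unfolding pi_rep_def by simp
      also have "\<dots> = f h" using elim(2) unfolding pi_rep_def by simp
      finally show ?case .
    qed
  qed
  define g where "g h = ennreal (norm (f h) powr p)" for h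
  have gm: "g \<in> borel_measurable M" unfolding g_def using fm by measurable
  define A where "A K = (\<integral>\<^sup>+ h. g h * indicator K h \<partial>M)" for K
  define B where "B K = (\<integral>\<^sup>+ h. g h * indicator (- K) h \<partial>M)" for K
  define T where "T = (\<integral>\<^sup>+ h. g h \<partial>M)"
  have Tfin: "T < \<infinity>"
  proof -
    have "(\<integral>\<^sup>+x. norm (norm (f x) powr p) \<partial>M) < \<infinity>" using fi by (simp add: integrable_iff_bounded)
    then show ?thesis unfolding T_def g_def by simp
  qed
  have KinM: "K \<in> sets M" if "compact K" for K
    using that sM by (simp add: compact_imp_closed borel_closed)
  have est: "A K \<le> ennreal C * B K" if K: "compact K" for K
  proof -
    obtain n where n: "n > 0" "\<And>h. h \<in> K \<Longrightarrow> h * \<xi> ^ n \<notin> K"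
      using escape[OF tg K nc] by blast
    have Km: "K \<in> sets M" using KinM[OF K] .
    have cKm: "- K \<in> sets M" using Km spM by (metis Compl_eq_Diff_UNIV sets.compl_sets)
    define u where "u h = indicator (- K) h *\<^sub>R f h" for h
    have um: "u \<in> borel_measurable M" unfolding u_def using fm cKm by measurable
    have nu: "norm (u h) powr p = indicator (- K) h *\<^sub>R norm (f h) powr p" for h
      unfolding u_def using p by (simp split: split_indicator)
    have "integrable M (\<lambda>h. indicator (- K) h *\<^sub>R norm (f h) powr p)"
      by (rule integrable_mult_indicator[OF cKm fi])
    then have uL: "u \<in> Lp_space M p" unfolding Lp_space_def using um nu by simp
    have Bu: "Lp_pow M p u = B K"
      unfolding Lp_pow_def B_def g_def nu by (intro nn_integral_cong) (simp split: split_indicator)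
    have "A K \<le> Lp_pow M p (pi_rep \<pi>0 (\<xi> ^ n) u)"
      unfolding A_def Lp_pow_def
    proof (rule nn_integral_mono_AE)
      show "AE h in M. g h * indicator K h \<le> ennreal (norm (pi_rep \<pi>0 (\<xi> ^ n) u h) powr p)"
        using iter[OF n(1)]
      proof eventually_elim
        case (elim h)
        show ?case
        proof (cases "h \<in> K")
          case True
          then have "h * \<xi> ^ n \<notin> K" using n(2) by blast
          then have "pi_rep \<pi>0 (\<xi> ^ n) u h = pi_rep \<pi>0 (\<xi> ^ n) f h"
            unfolding pi_rep_def u_def by simp
          then show ?thesis using elim True unfolding g_def by simp
        qed simp
      qed
    qed
    also have "\<dots> \<le> ennreal C * B K" using C(2)[OF n(1) uL] Bu by simp
    finally show ?thesis .
  qed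
  have ABT: "A K + B K = T" if "compact K" for K
  proof -
    have Km: "K \<in> sets M" using KinM[OF that] .
    have cKm: "- K \<in> sets M" using Km spM by (metis Compl_eq_Diff_UNIV sets.compl_sets)
    have "A K + B K = (\<integral>\<^sup>+ h. g h * indicator K h + g h * indicator (- K) h \<partial>M)"
      unfolding A_def B_def by (intro nn_integral_add[symmetric] borel_measurable_times_ennreal borel_measurable_indicator gm Km cKm)
    also have "\<dots> = T" unfolding T_def by (intro nn_integral_cong) (simp split: split_indicator)
    finally show ?thesis .
  qed
  obtain K :: "nat \<Rightarrow> 'g set" where K: "incseq K" "\<And>m. compact (K m)" "(\<Union>m. K m) = UNIV"
    using sigma_compact[OF assms(2)] by blast
  have TSUP: "T = (SUP m. A (K m))"
  proof -
    have "(\<integral>\<^sup>+ h. (SUP m. g h * indicator (K m) h) \<partial>M) = (SUP m. A (K m))"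
      unfolding A_def
    proof (rule nn_integral_monotone_convergence_SUP)
      show "incseq (\<lambda>m h. g h * indicator (K m) h)"
      proof (intro monoI le_funI)
        fix m m' :: nat and h assume "m \<le> m'"
        then have "K m \<subseteq> K m'" using K(1) by (simp add: incseq_def)
        then show "g h * indicator (K m) h \<le> g h * indicator (K m') h"
          by (intro mult_left_mono) (auto split: split_indicator)
      qed
      show "(\<lambda>h. g h * indicator (K m) h) \<in> borel_measurable M" for m
        by (intro borel_measurable_times_ennreal borel_measurable_indicator gm KinM K(2))
    qed
    moreover have "(SUP m. g h * indicator (K m) h) = g h" for h
    proof (rule antisym)
      show "(SUP m. g h * indicator (K m) h) \<le> g h"
        by (rule SUP_least) (simp split: split_indicator)
      obtain m where "h \<in> K m" using K(3) by blast
      then have "g h = g h * indicator (K m) h" by simp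
      also have "\<dots> \<le> (SUP m. g h * indicator (K m) h)" by (rule SUP_upper) simp
      finally show "g h \<le> (SUP m. g h * indicator (K m) h)" .
    qed
    ultimately show ?thesis unfolding T_def by simp
  qed
  define t where "t = enn2real T"
  have Tt: "T = ennreal t" unfolding t_def using Tfin by simp
  have t0: "t \<ge> 0" unfolding t_def by simp
  have Abound: "A (K m) \<le> ennreal (C * t / (1 + C))" for m
    by (rule enn_arith[OF C(1) est[OF K(2)] ABT[OF K(2)] Tt t0])
  have "T \<le> ennreal (C * t / (1 + C))" unfolding TSUP by (rule SUP_least) (rule Abound)
  then have "t \<le> C * t / (1 + C)" using Tt C(1) t0 by (simp add: ennreal_le_iff)
  then have "t = 0" using C(1) t0 by (intro fin_arith) auto
  then have "T = 0" using Tt by simp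
  then have "AE h in M. g h = 0" using nn_integral_0_iff_AE[OF gm] unfolding T_def by simp
  then show ?thesis unfolding g_def
    by eventually_elim (use p in simp)
qed

end
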